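(* Let $k,t$ be positive integers with $t\geq k$. Let $D'$ be an $n$-vertex digraph and $\sigma$ an ordering of $V(D')$ such that $D'$ is $(\sigma,k,t)$-good. Then for every set $S \subseteq V(D')$ of $k-1$ vertices and every $v \in V(D')\setminus S$, there exist a directed path in $D'-S$ from $v$ to a vertex of $\sigma(n-t+1,n)$ and a directed path in $D'-S$ from a vertex of $\sigma(1,t)$ to $v$.
   Context: For an ordering $\sigma = (v_1,\dots, v_n)$ of the vertices of a digraph, an arc from $v_i$ to $v_j$ is $\sigma$-forward if $i<j$. For integers $a,b$, $\sigma(a,b) := \{ v_{\ell} : a\leq \ell \leq b, \ell \in \{1,\dots,n\}\}$. For positive integers $k,t$, an $n$-vertex digraph $D$ with ordering $\sigma$ of $V(D)$ is $(\sigma,k,t)$-good if: (D1) every arc of $D$ is $\sigma$-forward; (D2) every vertex in $\sigma(1,n-t)$ has out-degree at least $k$ in $D$; (D3) every vertex in $\sigma(t+1,n)$ has in-degree at least $k$ in $D$. A path may consist of a single vertex. $D'-S$ denotes the digraph obtained by deleting $S$. *)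

theory Defs
  imports Main
begin

text \<open>An ordering sigma of V is a list of the vertices, each exactly once;
  sigma ! (i-1) is the vertex v_i.\<close>

definition digraph :: "'a set \<Rightarrow> ('a \<times> 'a) set \<Rightarrow> bool" where
  "digraph V A \<longleftrightarrow> finite V \<and> A \<subseteq> V \<times> V"

definition is_ordering :: "'a list \<Rightarrow> 'a set \<Rightarrow> bool" where
  "is_ordering sigma V \<longleftrightarrow> distinct sigma \<and> set sigma = V"

definition out_deg :: "('a \<times> 'a) set \<Rightarrow> 'a \<Rightarrow> nat" where
  "out_deg A v = card {w. (v, w) \<in> A}"

definition in_deg :: "('a \<times> 'a) set \<Rightarrow> 'a \<Rightarrow> nat" where
  "in_deg A v = card {u. (u, v) \<in> A}"

definition seg :: "'a list \<Rightarrow> int \<Rightarrow> int \<Rightarrow> 'a set" where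
  "seg sigma a b = {sigma ! nat (l - 1) | l. a \<le> l \<and> l \<le> b \<and> 1 \<le> l \<and> l \<le> int (length sigma)}"

definition forward :: "'a list \<Rightarrow> 'a \<Rightarrow> 'a \<Rightarrow> bool" where
  "forward sigma x y \<longleftrightarrow> (\<exists>i j. i < j \<and> j < length sigma \<and> sigma ! i = x \<and> sigma ! j = y)"

definition good :: "'a set \<Rightarrow> ('a \<times> 'a) set \<Rightarrow> 'a list \<Rightarrow> nat \<Rightarrow> nat \<Rightarrow> bool" where
  "good V A sigma k t \<longleftrightarrow>
     (\<forall>(x, y) \<in> A. forward sigma x y) \<and>
     (\<forall>v \<in> seg sigma 1 (int (card V) - int t). k \<le> out_deg A v) \<and>
     (\<forall>v \<in> seg sigma (int t + 1) (int (card V)). k \<le> in_deg A v)"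

definition dpath :: "'a set \<Rightarrow> ('a \<times> 'a) set \<Rightarrow> 'a list \<Rightarrow> bool" where
  "dpath V A p \<longleftrightarrow> p \<noteq> [] \<and> distinct p \<and> set p \<subseteq> V \<and>
     (\<forall>i. Suc i < length p \<longrightarrow> (p ! i, p ! Suc i) \<in> A)"

definition del_verts :: "'a set \<Rightarrow> ('a \<times> 'a) set \<Rightarrow> 'a set \<Rightarrow> 'a set \<times> ('a \<times> 'a) set" where
  "del_verts V A S = (V - S, A \<inter> ((V - S) \<times> (V - S)))"

end

theory Submission
  imports Defs
begin

lemma dpath_cons:
  assumes "dpath V A p" "(v, hd p) \<in> A" "v \<in> V" "v \<notin> set p"
  shows "dpath V A (v # p)"
  unfolding dpath_def
proof (intro conjI allI impI)
  fix i assume i: "Suc i < length (v # p)"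
  show "((v # p) ! i, (v # p) ! Suc i) \<in> A"
  proof (cases i)
    case 0 then show ?thesis using assms(1,2) by (auto simp: dpath_def hd_conv_nth)
  next
    case (Suc j) then show ?thesis using assms(1) i by (auto simp: dpath_def)
  qed
qed (use assms in \<open>auto simp: dpath_def\<close>)

lemma dpath_snoc:
  assumes "dpath V A p" "(last p, v) \<in> A" "v \<in> V" "v \<notin> set p"
  shows "dpath V A (p @ [v])"
  unfolding dpath_def
proof (intro conjI allI impI)
  fix i assume i: "Suc i < length (p @ [v])"
  show "((p @ [v]) ! i, (p @ [v]) ! Suc i) \<in> A"
  proof (cases "Suc i < length p")
    case True then show ?thesis using assms(1) by (auto simp: dpath_def nth_append)
  next
    case False
    then have "Suc i = length p" using i by simp
    moreover have "p \<noteq> []" using assms(1) by (simp add: dpath_def)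
    ultimately show ?thesis using assms(2) proof -
      have "length p - Suc 0 = i" using \<open>Suc i = length p\<close> by simp
      then show ?thesis using assms(2) \<open>p \<noteq> []\<close> \<open>Suc i = length p\<close> by (auto simp: nth_append last_conv_nth)
    qed
  qed
qed (use assms in \<open>auto simp: dpath_def\<close>)

lemma seg_mem:
  assumes "i < length sigma" "a \<le> int i + 1" "int i + 1 \<le> b"
  shows "sigma ! i \<in> seg sigma a b"
  unfolding seg_def
  by (rule CollectI, rule exI[of _ "int i + 1"]) (use assms in auto)

lemma single_dpath: "v \<in> V \<Longrightarrow> dpath V A [v]"
  by (simp add: dpath_def)

lemma fwd_idx:
  assumes "distinct sigma" "forward sigma x y" "i < length sigma" "sigma ! i = x"
    "j < length sigma" "sigma ! j = y"
  shows "i < j"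
proof -
  obtain i' j' where "i' < j'" "j' < length sigma" "sigma ! i' = x" "sigma ! j' = y"
    using assms(2) unfolding forward_def by blast
  then show ?thesis using assms nth_eq_iff_index_eq[OF assms(1)] by (metis order.strict_trans)
qed

lemma avoid:
  assumes "finite V" "N \<subseteq> V" "S \<subseteq> V" "card S = k - 1" "0 < k" "k \<le> card N"
  shows "\<exists>w\<in>N. w \<notin> S"
proof (rule ccontr)
  assume "\<not> ?thesis"
  then have "N \<subseteq> S" by blast
  then have "card N \<le> card S" using assms by (meson card_mono finite_subset)
  then show False using assms by linarith
qed

theorem claim3p1:
  fixes V :: "'a set" and A :: "('a \<times> 'a) set" and sigma :: "'a list" and k t n :: nat
  assumes "0 < k" and "0 < t" and "k \<le> t"
    and "digraph V A" and "card V = n"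
    and "is_ordering sigma V"
    and "good V A sigma k t"
  shows "\<forall>S v. S \<subseteq> V \<and> card S = k - 1 \<and> v \<in> V - S \<longrightarrow>
           (\<exists>p. dpath (fst (del_verts V A S)) (snd (del_verts V A S)) p \<and>
                hd p = v \<and> last p \<in> seg sigma (int n - int t + 1) (int n)) \<and>
           (\<exists>q. dpath (fst (del_verts V A S)) (snd (del_verts V A S)) q \<and>
                hd q \<in> seg sigma 1 (int t) \<and> last q = v)"
proof (intro allI impI)
  fix S v assume H: "S \<subseteq> V \<and> card S = k - 1 \<and> v \<in> V - S"
  define V' where "V' = V - S"
  define A' where "A' = A \<inter> (V' \<times> V')"
  have dv: "del_verts V A S = (V', A')" by (simp add: del_verts_def V'_def A'_def)
  have fin: "finite V" and AV: "A \<subseteq> V \<times> V" using assms(4) by (auto simp: digraph_def)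
  have dist: "distinct sigma" and setV: "set sigma = V" using assms(6) by (auto simp: is_ordering_def)
  have len: "length sigma = n" using assms(5) dist setV distinct_card by metis
  have fw: "\<And>x y. (x, y) \<in> A \<Longrightarrow> forward sigma x y"
    and outd: "\<And>v. v \<in> seg sigma 1 (int n - int t) \<Longrightarrow> k \<le> out_deg A v"
    and ind: "\<And>v. v \<in> seg sigma (int t + 1) (int n) \<Longrightarrow> k \<le> in_deg A v"
    using assms(7) assms(5) unfolding good_def by auto
  have S: "S \<subseteq> V" "card S = k - 1" using H by auto
  have F: "\<And>i. i < n \<Longrightarrow> sigma ! i \<notin> S \<Longrightarrow> \<exists>p. dpath V' A' p \<and> hd p = sigma ! i \<and>
      last p \<in> seg sigma (int n - int t + 1) (int n) \<and> (\<forall>x\<in>set p. \<exists>j. i \<le> j \<and> j < n \<and> x = sigma ! j)"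
  proof -
    fix i show "i < n \<Longrightarrow> sigma ! i \<notin> S \<Longrightarrow> ?thesis i"
    proof (induction "n - i" arbitrary: i rule: less_induct)
      case less
      have vV: "sigma ! i \<in> V'" using less.prems setV len V'_def by auto
      show ?case
      proof (cases "int n - int t + 1 \<le> int i + 1")
        case True
        then show ?thesis
          by (intro exI[of _ "[sigma ! i]"]) (use vV less.prems len in \<open>auto intro: single_dpath seg_mem\<close>)
      next
        case False
        then have "sigma ! i \<in> seg sigma 1 (int n - int t)" using less.prems len by (intro seg_mem) auto
        then have kd: "k \<le> card {w. (sigma ! i, w) \<in> A}" using outd by (simp add: out_deg_def)
        have "{w. (sigma ! i, w) \<in> A} \<subseteq> V" using AV by auto
        then obtain w where w: "(sigma ! i, w) \<in> A" "w \<notin> S"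
          using avoid[OF fin _ S assms(1) kd] by auto
        then have "w \<in> V" using AV by auto
        then obtain j where j: "j < n" "sigma ! j = w" using setV len by (metis in_set_conv_nth)
        have ij: "i < j" using fwd_idx[OF dist fw[OF w(1)]] less.prems j len by auto
        obtain p where p: "dpath V' A' p" "hd p = sigma ! j"
          "last p \<in> seg sigma (int n - int t + 1) (int n)" "\<forall>x\<in>set p. \<exists>j'. j \<le> j' \<and> j' < n \<and> x = sigma ! j'"
          using less.hyps[of j] ij j w less.prems by (meson diff_less_mono2)
        have nin: "sigma ! i \<notin> set p"
        proof
          assume "sigma ! i \<in> set p"
          then obtain j' where "j \<le> j'" "j' < n" "sigma ! i = sigma ! j'" using p(4) by blast
          then show False using nth_eq_iff_index_eq[OF dist] less.prems len ij by auto
        qed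
        have "(sigma ! i, hd p) \<in> A'" using w j p(2) vV \<open>w \<in> V\<close> A'_def V'_def by auto
        then have "dpath V' A' (sigma ! i # p)" using dpath_cons[OF p(1) _ vV nin] by auto
        moreover have "p \<noteq> []" using p(1) by (simp add: dpath_def)
        moreover have "\<forall>x\<in>set (sigma ! i # p). \<exists>j'. i \<le> j' \<and> j' < n \<and> x = sigma ! j'"
          using p(4) ij less.prems by (auto, meson less_imp_le order.trans)
        ultimately show ?thesis using p ij less.prems
          by (intro exI[of _ "sigma ! i # p"]) auto
      qed
    qed
  qed
  have B: "\<And>i. i < n \<Longrightarrow> sigma ! i \<notin> S \<Longrightarrow> \<exists>p. dpath V' A' p \<and> last p = sigma ! i \<and>
      hd p \<in> seg sigma 1 (int t) \<and> (\<forall>x\<in>set p. \<exists>j. j \<le> i \<and> x = sigma ! j)"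
  proof -
    fix i show "i < n \<Longrightarrow> sigma ! i \<notin> S \<Longrightarrow> ?thesis i"
    proof (induction i rule: less_induct)
      case (less i)
      have vV: "sigma ! i \<in> V'" using less.prems setV len V'_def by auto
      show ?case
      proof (cases "int i + 1 \<le> int t")
        case True
        then show ?thesis
          by (intro exI[of _ "[sigma ! i]"]) (use vV less.prems len in \<open>auto intro: single_dpath seg_mem\<close>)
      next
        case False
        then have "sigma ! i \<in> seg sigma (int t + 1) (int n)" using less.prems len by (intro seg_mem) auto
        then have kd: "k \<le> card {w. (w, sigma ! i) \<in> A}" using ind by (simp add: in_deg_def)
        have "{w. (w, sigma ! i) \<in> A} \<subseteq> V" using AV by auto
        then obtain w where w: "(w, sigma ! i) \<in> A" "w \<notin> S"
          using avoid[OF fin _ S assms(1) kd] by auto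
        then have "w \<in> V" using AV by auto
        then obtain j where j: "j < n" "sigma ! j = w" using setV len by (metis in_set_conv_nth)
        have ij: "j < i" using fwd_idx[OF dist fw[OF w(1)]] less.prems j len by auto
        obtain p where p: "dpath V' A' p" "last p = sigma ! j"
          "hd p \<in> seg sigma 1 (int t)" "\<forall>x\<in>set p. \<exists>j'. j' \<le> j \<and> x = sigma ! j'"
          using less.IH[of j] ij j w by auto
        have nin: "sigma ! i \<notin> set p"
        proof
          assume "sigma ! i \<in> set p"
          then obtain j' where "j' \<le> j" "sigma ! i = sigma ! j'" using p(4) by blast
          then show False using nth_eq_iff_index_eq[OF dist] less.prems len ij by auto
        qed
        have "(last p, sigma ! i) \<in> A'" using w j p(2) vV \<open>w \<in> V\<close> A'_def V'_def by auto
        then have "dpath V' A' (p @ [sigma ! i])" using dpath_snoc[OF p(1) _ vV nin] by auto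
        moreover have "p \<noteq> []" using p(1) by (simp add: dpath_def)
        moreover have "\<forall>x\<in>set (p @ [sigma ! i]). \<exists>j'. j' \<le> i \<and> x = sigma ! j'"
          using p(4) ij by (auto, meson less_imp_le order.trans)
        ultimately show ?thesis using p ij less.prems
          by (intro exI[of _ "p @ [sigma ! i]"]) auto
      qed
    qed
  qed
  obtain i where i: "i < n" "sigma ! i = v" using H setV len by (metis DiffD1 in_set_conv_nth)
  have "sigma ! i \<notin> S" using H i by auto
  then show "(\<exists>p. dpath (fst (del_verts V A S)) (snd (del_verts V A S)) p \<and>
                hd p = v \<and> last p \<in> seg sigma (int n - int t + 1) (int n)) \<and>
           (\<exists>q. dpath (fst (del_verts V A S)) (snd (del_verts V A S)) q \<and>
                hd q \<in> seg sigma 1 (int t) \<and> last q = v)"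
    using F[OF i(1)] B[OF i(1)] i(2) unfolding dv by auto
qed

end
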